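(* For non-negative integers $p_1,p_2$, a positive integer $r$, integers $k_1,k_2$ and $x_1,x_2\in\mathbb{C}$, $$\sum_{j_1=0}^{p_1}\sum_{j_2=0}^{p_2}\binom{p_1}{j_1}\binom{p_2}{j_2}\left(B^{(k_1)}_{p_1-j_1}(x_1+r)B^{(k_2)}_{p_2-j_2}(x_2+r)-B^{(k_1)}_{p_1-j_1}(x_1)B^{(k_2)}_{p_2-j_2}(x_2)\right)B_{j_1+j_2}$$ $$=\sum_{j_1=0}^{p_1}\sum_{j_2=0}^{p_2}\binom{p_1}{j_1}\binom{p_2}{j_2}B^{(k_1)}_{p_1-j_1}(x_1)B^{(k_2)}_{p_2-j_2}(x_2)\left(B_{j_1+j_2}(r)-B_{j_1+j_2}\right)$$ $$=p_1\sum_{t=0}^{r-1}B^{(k_1)}_{p_1-1}(x_1+t)B^{(k_2)}_{p_2}(x_2+t)+p_2\sum_{t=0}^{r-1}B^{(k_1)}_{p_1}(x_1+t)B^{(k_2)}_{p_2-1}(x_2+t),$$ where the term with $p_i$ as factor is interpreted as $0$ when $p_i=0$.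
   Context: For an integer $k$, a non-negative integer $n$ and $x\in\mathbb{C}$, the poly-Bernoulli polynomial is $B_{n}^{(k)}(x)=\sum_{l=0}^{n}\frac{1}{(l+1)^{k}}\sum_{j=0}^{l}(-1)^{j}\binom{l}{j}(j+x)^{n}$. $B_n(x)$ are the Bernoulli polynomials, $\frac{te^{xt}}{e^t-1}=\sum_{n\ge0}B_n(x)\frac{t^n}{n!}$, and $B_n=B_n(0)$ the Bernoulli numbers (so $B_1=-1/2$). *)

theory Defs
  imports "HOL-Analysis.Analysis" "HOL-Computational_Algebra.Formal_Power_Series"
begin

definition bernpoly :: "nat \<Rightarrow> complex \<Rightarrow> complex" where
  "bernpoly n x = fact n * fps_nth (fps_X * fps_exp x / (fps_exp 1 - 1)) n"

definition bernoulli_num :: "nat \<Rightarrow> complex" where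
  "bernoulli_num n = bernpoly n 0"

definition poly_bernpoly :: "int \<Rightarrow> nat \<Rightarrow> complex \<Rightarrow> complex" where
  "poly_bernpoly k n x =
     (\<Sum>l=0..n. (1 / (of_nat (l+1)) powi k) *
        (\<Sum>j=0..l. (-1)^j * of_nat (l choose j) * (of_nat j + x)^n))"

end

theory Submission
  imports Defs
begin


lemma pascal_sum:
  fixes g :: "nat \<Rightarrow> 'a::comm_semiring_1"
  shows "(\<Sum>a\<le>Suc n. of_nat (Suc n choose a) * g a)
       = (\<Sum>a\<le>n. of_nat (n choose a) * g a) + (\<Sum>a\<le>n. of_nat (n choose a) * g (Suc a))"
proof -
  have 1: "(\<Sum>a\<le>Suc n. of_nat (Suc n choose a) * g a)
      = g 0 + (\<Sum>i\<le>n. of_nat (n choose i) * g (Suc i)) + (\<Sum>i\<le>n. of_nat (n choose Suc i) * g (Suc i))"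
    by (subst sum.atMost_Suc_shift) (simp add: distrib_right sum.distrib add.assoc)
  have 2: "g 0 + (\<Sum>i\<le>n. of_nat (n choose Suc i) * g (Suc i)) = (\<Sum>a\<le>Suc n. of_nat (n choose a) * g a)"
    by (simp only: sum.atMost_Suc_shift[of _ n]) simp
  have 3: "(\<Sum>a\<le>Suc n. of_nat (n choose a) * g a) = (\<Sum>a\<le>n. of_nat (n choose a) * g a)"
    by (simp add: binomial_eq_0)
  show ?thesis using 1 2 3 by (metis (no_types, lifting) add.assoc add.commute)
qed

lemma vand:
  fixes f :: "nat \<Rightarrow> 'a::comm_semiring_1"
  shows "(\<Sum>a1\<le>j1. of_nat (j1 choose a1) * (\<Sum>a2\<le>j2. of_nat (j2 choose a2) * f (a1+a2)))
       = (\<Sum>i\<le>j1+j2. of_nat ((j1+j2) choose i) * f i)"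
proof (induction j1 arbitrary: f)
  case 0
  then show ?case by simp
next
  case (Suc j1)
  show ?case
    apply (subst pascal_sum)
    apply (simp only: add_Suc pascal_sum)
    using Suc[of f] Suc[of "\<lambda>i. f (Suc i)"] by simp
qed

lemma tri_swap:
  fixes G :: "nat \<Rightarrow> nat \<Rightarrow> 'a::comm_monoid_add"
  shows "(\<Sum>j\<le>p. \<Sum>a\<le>j. G a (j-a)) = (\<Sum>a\<le>p. \<Sum>m\<le>p-a. G a m)"
proof (induction p)
  case 0
  then show ?case by simp
next
  case (Suc p)
  have "(\<Sum>a\<le>Suc p. \<Sum>m\<le>Suc p-a. G a m) = (\<Sum>a\<le>p. \<Sum>m\<le>Suc p-a. G a m) + G (Suc p) 0"
    by simp
  also have "(\<Sum>a\<le>p. \<Sum>m\<le>Suc p-a. G a m) = (\<Sum>a\<le>p. (\<Sum>m\<le>p-a. G a m) + G a (Suc p - a))"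
    by (intro sum.cong refl) (simp add: Suc_diff_le)
  finally show ?case using Suc by (simp add: sum.distrib ac_simps)
qed

definition appell :: "(nat \<Rightarrow> complex \<Rightarrow> complex) \<Rightarrow> bool" where
  "appell P \<longleftrightarrow> (\<forall>n x y. P n (x+y) = (\<Sum>i\<le>n. of_nat (n choose i) * P (n-i) x * y^i))"

lemma conv1:
  assumes "appell P"
  shows "(\<Sum>j\<le>p. of_nat (p choose j) * P (p-j) x * (\<Sum>a\<le>j. of_nat (j choose a) * y^(j-a) * g a))
       = (\<Sum>a\<le>p. of_nat (p choose a) * P (p-a) (x+y) * g a)"
proof -
  define G where "G a m = of_nat (p choose (a+m)) * P (p-(a+m)) x * (of_nat ((a+m) choose a) * y^m * g a)" for a m
  have "(\<Sum>j\<le>p. of_nat (p choose j) * P (p-j) x * (\<Sum>a\<le>j. of_nat (j choose a) * y^(j-a) * g a))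
       = (\<Sum>j\<le>p. \<Sum>a\<le>j. G a (j-a))"
    unfolding sum_distrib_left G_def by (intro sum.cong refl) simp
  also have "\<dots> = (\<Sum>a\<le>p. \<Sum>m\<le>p-a. G a m)" by (rule tri_swap)
  also have "\<dots> = (\<Sum>a\<le>p. of_nat (p choose a) * g a * (\<Sum>m\<le>p-a. of_nat ((p-a) choose m) * P ((p-a)-m) x * y^m))"
    unfolding sum_distrib_left
  proof (intro sum.cong refl)
    fix a m assume a: "a \<in> {..p}" and m: "m \<in> {..p-a}"
    have "(p choose (a+m)) * ((a+m) choose a) = (p choose a) * ((p-a) choose m)"
      using choose_mult[of a "a+m" p] a m by simp
    hence "(of_nat (p choose (a+m)) * of_nat ((a+m) choose a) :: complex) = of_nat (p choose a) * of_nat ((p-a) choose m)"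
      by (metis of_nat_mult)
    moreover have "p - (a+m) = p - a - m" by simp
    ultimately show "G a m = of_nat (p choose a) * g a * (of_nat ((p-a) choose m) * P ((p-a)-m) x * y^m)"
      unfolding G_def by (metis (no_types, lifting) mult.assoc mult.commute mult.left_commute)
  qed
  also have "\<dots> = (\<Sum>a\<le>p. of_nat (p choose a) * P (p-a) (x+y) * g a)"
    using assms unfolding appell_def by (simp add: ac_simps)
  finally show ?thesis .
qed

lemma conv2:
  assumes "appell P"
  shows "(\<Sum>j\<le>p. of_nat (p choose j) * P (p-j) x * (of_nat j * t^(j-1)))
       = (if p = 0 then 0 else of_nat p * P (p-1) (x+t))"
proof (cases p)
  case 0 then show ?thesis by simp
next
  case (Suc q)
  have "(\<Sum>j\<le>p. of_nat (p choose j) * P (p-j) x * (of_nat j * t^(j-1)))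
      = (\<Sum>i\<le>q. of_nat (Suc q choose Suc i) * P (q-i) x * (of_nat (Suc i) * t^i))"
    unfolding Suc by (subst sum.atMost_Suc_shift) simp
  also have "\<dots> = (\<Sum>i\<le>q. of_nat (Suc q) * (of_nat (q choose i) * P (q-i) x * t^i))"
  proof (intro sum.cong refl)
    fix i
    have "(of_nat (Suc q choose Suc i) * of_nat (Suc i) :: complex) = of_nat (Suc q) * of_nat (q choose i)"
      by (metis Suc_times_binomial_eq of_nat_mult)
    then show "of_nat (Suc q choose Suc i) * P (q-i) x * (of_nat (Suc i) * t^i)
       = of_nat (Suc q) * (of_nat (q choose i) * P (q-i) x * t^i)"
      by (metis (no_types, lifting) mult.assoc mult.commute mult.left_commute)
  qed
  also have "\<dots> = of_nat p * P (p-1) (x+t)"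
    using assms unfolding appell_def Suc by (simp add: sum_distrib_left)
  finally show ?thesis using Suc by simp
qed

lemma appell_rev:
  assumes "appell R"
  shows "R n y = (\<Sum>i\<le>n. of_nat (n choose i) * (R i 0 * y^(n-i)))"
proof -
  have "R n y = R n (0+y)" by simp
  also have "\<dots> = (\<Sum>i\<le>n. of_nat (n choose i) * R (n-i) 0 * y^i)"
    using assms unfolding appell_def by blast
  also have "\<dots> = (\<Sum>i\<le>n. of_nat (n choose (n-i)) * (R (n-i) 0 * y^(n-(n-i))))"
    by (intro sum.cong refl) (auto simp: binomial_symmetric[symmetric])
  also have "\<dots> = (\<Sum>i\<le>n. of_nat (n choose i) * (R i 0 * y^(n-i)))"
    by (rule sum.reindex_bij_witness[where i="\<lambda>i. n-i" and j="\<lambda>i. n-i"]) auto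
  finally show ?thesis .
qed

lemma biv:
  assumes "appell R"
  shows "R (j1+j2) y = (\<Sum>a1\<le>j1. of_nat (j1 choose a1) * y^(j1-a1) *
             (\<Sum>a2\<le>j2. of_nat (j2 choose a2) * y^(j2-a2) * R (a1+a2) 0))"
proof -
  have "R (j1+j2) y = (\<Sum>i\<le>j1+j2. of_nat ((j1+j2) choose i) * (R i 0 * y^(j1+j2-i)))"
    by (rule appell_rev[OF assms])
  also have "\<dots> = (\<Sum>a1\<le>j1. of_nat (j1 choose a1) * (\<Sum>a2\<le>j2. of_nat (j2 choose a2) *
        (R (a1+a2) 0 * y^(j1+j2-(a1+a2)))))"
    by (rule vand[symmetric])
  also have "\<dots> = (\<Sum>a1\<le>j1. of_nat (j1 choose a1) * y^(j1-a1) *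
             (\<Sum>a2\<le>j2. of_nat (j2 choose a2) * y^(j2-a2) * R (a1+a2) 0))"
    unfolding sum_distrib_left
  proof (intro sum.cong refl)
    fix a1 a2 assume "a1 \<in> {..j1}" "a2 \<in> {..j2}"
    then have "j1+j2-(a1+a2) = (j1-a1) + (j2-a2)" by auto
    then show "of_nat (j1 choose a1) * (of_nat (j2 choose a2) * (R (a1+a2) 0 * y^(j1+j2-(a1+a2))))
      = of_nat (j1 choose a1) * y^(j1-a1) * (of_nat (j2 choose a2) * y^(j2-a2) * R (a1+a2) 0)"
      by (simp add: power_add ac_simps)
  qed
  finally show ?thesis .
qed

lemma lemA:
  assumes P: "appell P" and Q: "appell Q" and R: "appell R"
  shows "(\<Sum>j1\<le>p1. \<Sum>j2\<le>p2. of_nat (p1 choose j1) * of_nat (p2 choose j2) * P (p1-j1) x1 * Q (p2-j2) x2 * R (j1+j2) y)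
       = (\<Sum>j1\<le>p1. \<Sum>j2\<le>p2. of_nat (p1 choose j1) * of_nat (p2 choose j2) * P (p1-j1) (x1+y) * Q (p2-j2) (x2+y) * R (j1+j2) 0)"
proof -
  define g where "g j2 a1 = (\<Sum>a2\<le>j2. of_nat (j2 choose a2) * y^(j2-a2) * R (a1+a2) 0)" for j2 a1
  have "(\<Sum>j1\<le>p1. \<Sum>j2\<le>p2. of_nat (p1 choose j1) * of_nat (p2 choose j2) * P (p1-j1) x1 * Q (p2-j2) x2 * R (j1+j2) y)
     = (\<Sum>j2\<le>p2. \<Sum>j1\<le>p1. of_nat (p2 choose j2) * Q (p2-j2) x2 *
          (of_nat (p1 choose j1) * P (p1-j1) x1 * (\<Sum>a1\<le>j1. of_nat (j1 choose a1) * y^(j1-a1) * g j2 a1)))"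
    apply (subst sum.swap) apply (intro sum.cong refl) apply (subst biv[OF R]) apply (simp only: g_def)
    by (simp only: ac_simps)
  also have "\<dots> = (\<Sum>j2\<le>p2. of_nat (p2 choose j2) * Q (p2-j2) x2 *
          (\<Sum>j1\<le>p1. of_nat (p1 choose j1) * P (p1-j1) x1 * (\<Sum>a1\<le>j1. of_nat (j1 choose a1) * y^(j1-a1) * g j2 a1)))"
    by (simp only: sum_distrib_left)
  also have "\<dots> = (\<Sum>j2\<le>p2. of_nat (p2 choose j2) * Q (p2-j2) x2 *
          (\<Sum>a1\<le>p1. of_nat (p1 choose a1) * P (p1-a1) (x1+y) * g j2 a1))"
    by (simp only: conv1[OF P])
  also have "\<dots> = (\<Sum>j2\<le>p2. \<Sum>a1\<le>p1. of_nat (p1 choose a1) * P (p1-a1) (x1+y) *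
          (of_nat (p2 choose j2) * Q (p2-j2) x2 * g j2 a1))"
    by (simp only: sum_distrib_left ac_simps)
  also have "\<dots> = (\<Sum>a1\<le>p1. of_nat (p1 choose a1) * P (p1-a1) (x1+y) *
          (\<Sum>j2\<le>p2. of_nat (p2 choose j2) * Q (p2-j2) x2 * (\<Sum>a2\<le>j2. of_nat (j2 choose a2) * y^(j2-a2) * R (a1+a2) 0)))"
    by (subst sum.swap) (simp only: sum_distrib_left g_def)
  also have "\<dots> = (\<Sum>a1\<le>p1. of_nat (p1 choose a1) * P (p1-a1) (x1+y) *
          (\<Sum>a2\<le>p2. of_nat (p2 choose a2) * Q (p2-a2) (x2+y) * R (a1+a2) 0))"
    by (simp only: conv1[OF Q])
  also have "\<dots> = (\<Sum>j1\<le>p1. \<Sum>j2\<le>p2. of_nat (p1 choose j1) * of_nat (p2 choose j2) * P (p1-j1) (x1+y) * Q (p2-j2) (x2+y) * R (j1+j2) 0)"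
    by (simp only: sum_distrib_left ac_simps)
  finally show ?thesis .
qed



definition D :: "nat \<Rightarrow> complex \<Rightarrow> nat \<Rightarrow> complex" where
  "D l x m = (\<Sum>j\<le>l. of_nat (l choose j) * ((-1)^j * (of_nat j + x)^m))"

lemma pow_diff_sum:
  fixes z :: complex
  shows "(z+1)^m - z^m = (\<Sum>i<m. of_nat (m choose i) * z^i)"
proof -
  have "(z+1)^m = (\<Sum>i\<le>m. of_nat (m choose i) * z^i * 1^(m-i))"
    by (rule binomial_ring)
  also have "\<dots> = (\<Sum>i<m. of_nat (m choose i) * z^i) + z^m"
    by (simp add: lessThan_Suc_atMost[symmetric])
  finally show ?thesis by simp
qed

lemma D_zero: "m < l \<Longrightarrow> D l x m = 0"
proof (induction l arbitrary: x m)
  case 0 then show ?case by simp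
next
  case (Suc l)
  have "D (Suc l) x m = D l x m + (\<Sum>j\<le>l. of_nat (l choose j) * ((-1)^(Suc j) * (of_nat (Suc j) + x)^m))"
    unfolding D_def by (rule pascal_sum)
  also have "(\<Sum>j\<le>l. of_nat (l choose j) * ((-1)^(Suc j) * (of_nat (Suc j) + x)^m)) = - D l (x+1) m"
    unfolding D_def by (simp add: sum_negf[symmetric] add_ac)
  finally have 1: "D (Suc l) x m = - (D l (x+1) m - D l x m)" by simp
  have "D l (x+1) m - D l x m = (\<Sum>j\<le>l. of_nat (l choose j) * ((-1)^j * ((of_nat j + x + 1)^m - (of_nat j + x)^m)))"
    unfolding D_def by (simp add: sum_subtractf[symmetric] algebra_simps)
  also have "\<dots> = (\<Sum>j\<le>l. of_nat (l choose j) * ((-1)^j * (\<Sum>i<m. of_nat (m choose i) * (of_nat j + x)^i)))"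
    by (simp only: pow_diff_sum)
  also have "\<dots> = (\<Sum>i<m. of_nat (m choose i) * D l x i)"
    unfolding D_def sum_distrib_left by (subst sum.swap) (simp add: ac_simps)
  also have "\<dots> = 0"
    using Suc by (intro sum.neutral) auto
  finally show ?case using 1 by simp
qed

definition cc :: "int \<Rightarrow> nat \<Rightarrow> complex" where
  "cc k l = 1 / (of_nat (l+1)) powi k"

lemma pb_D: "poly_bernpoly k n x = (\<Sum>l\<le>n. cc k l * D l x n)"
  unfolding poly_bernpoly_def cc_def D_def atLeast0AtMost
  by (intro sum.cong refl) (simp add: ac_simps)

lemma pb_ext: "n \<le> N \<Longrightarrow> poly_bernpoly k n x = (\<Sum>l\<le>N. cc k l * D l x n)"
proof (induction N rule: dec_induct)
  case base then show ?case by (rule pb_D)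
next
  case (step N) then show ?case by (simp add: D_zero)
qed

lemma appell_pb: "appell (poly_bernpoly k)"
  unfolding appell_def
proof (intro allI)
  fix n x y
  have "poly_bernpoly k n (x+y) = (\<Sum>l\<le>n. cc k l * D l (x+y) n)" by (rule pb_D)
  also have "\<dots> = (\<Sum>l\<le>n. cc k l * (\<Sum>j\<le>l. of_nat (l choose j) * ((-1)^j *
        (\<Sum>i\<le>n. of_nat (n choose i) * y^i * (of_nat j + x)^(n-i)))))"
  proof -
    have e: "(of_nat j + (x+y))^n = (\<Sum>i\<le>n. of_nat (n choose i) * y^i * (of_nat j + x)^(n-i))" for j
      using binomial_ring[of y "of_nat j + x" n] by (simp add: ac_simps)
    show ?thesis unfolding D_def e ..
  qed
  also have "\<dots> = (\<Sum>i\<le>n. of_nat (n choose i) * y^i * (\<Sum>l\<le>n. cc k l * D l x (n-i)))"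
  proof -
    have "(\<Sum>l\<le>n. cc k l * (\<Sum>j\<le>l. of_nat (l choose j) * ((-1)^j *
        (\<Sum>i\<le>n. of_nat (n choose i) * y^i * (of_nat j + x)^(n-i)))))
      = (\<Sum>l\<le>n. \<Sum>i\<le>n. \<Sum>j\<le>l. of_nat (n choose i) * y^i * (cc k l * (of_nat (l choose j) * ((-1)^j * (of_nat j + x)^(n-i)))))"
      unfolding sum_distrib_left
      apply (rule sum.cong[OF refl])
      apply (subst sum.swap)
      by (simp only: ac_simps)
    also have "\<dots> = (\<Sum>i\<le>n. \<Sum>l\<le>n. \<Sum>j\<le>l. of_nat (n choose i) * y^i * (cc k l * (of_nat (l choose j) * ((-1)^j * (of_nat j + x)^(n-i)))))"
      by (rule sum.swap)
    also have "\<dots> = (\<Sum>i\<le>n. of_nat (n choose i) * y^i * (\<Sum>l\<le>n. cc k l * D l x (n-i)))"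
      unfolding D_def sum_distrib_left ..
    finally show ?thesis .
  qed
  also have "\<dots> = (\<Sum>i\<le>n. of_nat (n choose i) * poly_bernpoly k (n-i) x * y^i)"
    by (intro sum.cong refl) (simp add: pb_ext[of "n-_" n])
  finally show "poly_bernpoly k n (x+y) = (\<Sum>i\<le>n. of_nat (n choose i) * poly_bernpoly k (n-i) x * y^i)" .
qed



definition FF :: "complex \<Rightarrow> complex fps" where
  "FF x = fps_X * fps_exp x / (fps_exp 1 - 1)"

lemma bp_FF: "bernpoly n x = fact n * fps_nth (FF x) n"
  unfolding bernpoly_def FF_def ..

lemma sd_D: "subdegree (fps_exp (1::complex) - 1) = 1"
  by (rule subdegreeI) auto

lemma D_nz: "fps_exp (1::complex) - 1 \<noteq> 0"
  using sd_D by auto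

lemma sd_N: "subdegree (fps_X * fps_exp (x::complex)) = 1"
proof -
  have "fps_nth (fps_exp x) 0 \<noteq> 0" by simp
  hence "fps_exp x \<noteq> 0" by auto
  moreover have "subdegree (fps_exp x) = 0" by (rule subdegreeI) auto
  ultimately show ?thesis by simp
qed

lemma FF_add: "FF (x+y) = FF x * fps_exp y"
  unfolding FF_def fps_exp_add_mult mult.assoc[symmetric]
  by (rule fps_divide_times2) (unfold sd_D sd_N, simp)

lemma FF_diff: "FF (x+1) - FF x = fps_X * fps_exp x"
proof -
  have "FF (x+1) - FF x = FF x * (fps_exp 1 - 1)"
    unfolding FF_add[of x 1] by (simp add: algebra_simps)
  also have "\<dots> = fps_X * fps_exp x"
    unfolding FF_def by (rule fps_times_divide_eq) (unfold sd_D sd_N, simp_all add: D_nz)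
  finally show ?thesis .
qed

lemma bp_rev: "bernpoly n (x+y) = (\<Sum>i\<le>n. of_nat (n choose i) * (bernpoly i x * y^(n-i)))"
proof -
  have "bernpoly n (x+y) = fact n * (\<Sum>i=0..n. fps_nth (FF x) i * (y^(n-i) / fact (n-i)))"
    unfolding bp_FF FF_add fps_mult_nth by simp
  also have "\<dots> = (\<Sum>i\<le>n. of_nat (n choose i) * (bernpoly i x * y^(n-i)))"
    unfolding sum_distrib_left atLeast0AtMost bp_FF
    by (intro sum.cong refl) (simp add: binomial_fact field_simps)
  finally show ?thesis .
qed

lemma appell_bp: "appell bernpoly"
  unfolding appell_def
proof (intro allI)
  fix n x y
  have "bernpoly n (x+y) = (\<Sum>i\<le>n. of_nat (n choose i) * (bernpoly i x * y^(n-i)))" by (rule bp_rev)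
  also have "\<dots> = (\<Sum>i\<le>n. of_nat (n choose (n-i)) * (bernpoly (n-i) x * y^(n-(n-i))))"
    by (rule sum.reindex_bij_witness[where i="\<lambda>i. n-i" and j="\<lambda>i. n-i"]) auto
  also have "\<dots> = (\<Sum>i\<le>n. of_nat (n choose i) * bernpoly (n-i) x * y^i)"
    by (intro sum.cong refl) (auto simp: binomial_symmetric[symmetric])
  finally show "bernpoly n (x+y) = (\<Sum>i\<le>n. of_nat (n choose i) * bernpoly (n-i) x * y^i)" .
qed

lemma bp_step: "bernpoly n (x+1) - bernpoly n x = of_nat n * x^(n-1)"
proof -
  have "bernpoly n (x+1) - bernpoly n x = fact n * (fps_nth (FF (x+1)) n - fps_nth (FF x) n)"
    unfolding bp_FF by (simp add: right_diff_distrib)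
  also have "fps_nth (FF (x+1)) n - fps_nth (FF x) n = fps_nth (fps_X * fps_exp x) n"
    by (metis FF_diff fps_sub_nth)
  also have "fact n * fps_nth (fps_X * fps_exp x) n = of_nat n * x^(n-1)"
  proof (cases n)
    case 0 then show ?thesis by simp
  next
    case (Suc m)
    have "fact (Suc m) * (x^m / fact m) = (of_nat (Suc m) :: complex) * x^m"
      by (simp add: fact_Suc del: of_nat_Suc)
    then show ?thesis using Suc by simp
  qed
  finally show ?thesis .
qed

lemma bp_tele: "bernpoly m (of_nat r) - bernoulli_num m = (\<Sum>t<r. of_nat m * of_nat t ^ (m-1))"
proof -
  have "(\<Sum>t<r. bernpoly m (of_nat (Suc t)) - bernpoly m (of_nat t)) = bernpoly m (of_nat r) - bernpoly m (of_nat 0)"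
    by (rule sum_lessThan_telescope)
  moreover have "bernpoly m (of_nat (Suc t)) - bernpoly m (of_nat t) = of_nat m * of_nat t ^ (m-1)" for t
    using bp_step[of m "of_nat t"] by (simp add: add.commute)
  ultimately show ?thesis unfolding bernoulli_num_def by simp
qed



lemma split_pow:
  fixes t :: complex
  shows "of_nat (j1+j2) * t^(j1+j2-1) = (of_nat j1 * t^(j1-1)) * t^j2 + t^j1 * (of_nat j2 * t^(j2-1))"
proof (cases "j1 = 0")
  case True then show ?thesis by simp
next
  case False
  note j1 = False
  show ?thesis
  proof (cases "j2 = 0")
    case True then show ?thesis by simp
  next
    case False
    have a: "t^(j1+j2-1) = t^(j1-1) * t^j2" using j1 by (simp add: power_add[symmetric])
    have b: "t^(j1+j2-1) = t^j1 * t^(j2-1)" using False by (simp add: power_add[symmetric])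
    have "of_nat (j1+j2) * t^(j1+j2-1) = of_nat j1 * t^(j1+j2-1) + of_nat j2 * t^(j1+j2-1)"
      by (simp add: distrib_right)
    also have "\<dots> = (of_nat j1 * t^(j1-1)) * t^j2 + t^j1 * (of_nat j2 * t^(j2-1))"
      by (subst a, subst b) (simp add: ac_simps)
    finally show ?thesis .
  qed
qed

theorem mainTheorem13:
  fixes p1 p2 r :: nat and k1 k2 :: int and x1 x2 :: complex
  assumes "r > 0"
  shows "(\<Sum>j1=0..p1. \<Sum>j2=0..p2. of_nat (p1 choose j1) * of_nat (p2 choose j2) *
            (poly_bernpoly k1 (p1 - j1) (x1 + of_nat r) * poly_bernpoly k2 (p2 - j2) (x2 + of_nat r)
             - poly_bernpoly k1 (p1 - j1) x1 * poly_bernpoly k2 (p2 - j2) x2) * bernoulli_num (j1 + j2))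
       = (\<Sum>j1=0..p1. \<Sum>j2=0..p2. of_nat (p1 choose j1) * of_nat (p2 choose j2) *
            poly_bernpoly k1 (p1 - j1) x1 * poly_bernpoly k2 (p2 - j2) x2 *
            (bernpoly (j1 + j2) (of_nat r) - bernoulli_num (j1 + j2)))
     \<and> (\<Sum>j1=0..p1. \<Sum>j2=0..p2. of_nat (p1 choose j1) * of_nat (p2 choose j2) *
            poly_bernpoly k1 (p1 - j1) x1 * poly_bernpoly k2 (p2 - j2) x2 *
            (bernpoly (j1 + j2) (of_nat r) - bernoulli_num (j1 + j2)))
       = (if p1 = 0 then 0 else of_nat p1 * (\<Sum>t<r. poly_bernpoly k1 (p1 - 1) (x1 + of_nat t) * poly_bernpoly k2 p2 (x2 + of_nat t)))
         + (if p2 = 0 then 0 else of_nat p2 * (\<Sum>t<r. poly_bernpoly k1 p1 (x1 + of_nat t) * poly_bernpoly k2 (p2 - 1) (x2 + of_nat t)))"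
proof -
  let ?P = "poly_bernpoly k1" and ?Q = "poly_bernpoly k2"
  have P: "appell ?P" and Q: "appell ?Q" by (rule appell_pb)+
  define X where "X = (\<Sum>j1\<le>p1. \<Sum>j2\<le>p2. of_nat (p1 choose j1) * of_nat (p2 choose j2) * ?P (p1-j1) (x1 + of_nat r) * ?Q (p2-j2) (x2 + of_nat r) * bernpoly (j1+j2) 0)"
  define Y where "Y = (\<Sum>j1\<le>p1. \<Sum>j2\<le>p2. of_nat (p1 choose j1) * of_nat (p2 choose j2) * ?P (p1-j1) x1 * ?Q (p2-j2) x2 * bernpoly (j1+j2) 0)"
  define Z where "Z = (\<Sum>j1\<le>p1. \<Sum>j2\<le>p2. of_nat (p1 choose j1) * of_nat (p2 choose j2) * ?P (p1-j1) x1 * ?Q (p2-j2) x2 * bernpoly (j1+j2) (of_nat r))"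
  have ZX: "Z = X" unfolding Z_def X_def by (rule lemA[OF P Q appell_bp])
  have L1: "(\<Sum>j1=0..p1. \<Sum>j2=0..p2. of_nat (p1 choose j1) * of_nat (p2 choose j2) *
            (?P (p1 - j1) (x1 + of_nat r) * ?Q (p2 - j2) (x2 + of_nat r)
             - ?P (p1 - j1) x1 * ?Q (p2 - j2) x2) * bernoulli_num (j1 + j2)) = X - Y"
    unfolding X_def Y_def atLeast0AtMost bernoulli_num_def sum_subtractf[symmetric]
    by (intro sum.cong refl) (simp add: algebra_simps)
  have R1: "(\<Sum>j1=0..p1. \<Sum>j2=0..p2. of_nat (p1 choose j1) * of_nat (p2 choose j2) *
            ?P (p1 - j1) x1 * ?Q (p2 - j2) x2 *
            (bernpoly (j1 + j2) (of_nat r) - bernoulli_num (j1 + j2))) = Z - Y"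
    unfolding Z_def Y_def atLeast0AtMost bernoulli_num_def sum_subtractf[symmetric]
    by (intro sum.cong refl) (simp add: algebra_simps)
  define A where "A t = (\<Sum>j1\<le>p1. of_nat (p1 choose j1) * ?P (p1-j1) x1 * (of_nat j1 * t^(j1-1)))" for t :: complex
  define A' where "A' t = (\<Sum>j1\<le>p1. of_nat (p1 choose j1) * ?P (p1-j1) x1 * t^j1)" for t :: complex
  define C where "C t = (\<Sum>j2\<le>p2. of_nat (p2 choose j2) * ?Q (p2-j2) x2 * (of_nat j2 * t^(j2-1)))" for t :: complex
  define C' where "C' t = (\<Sum>j2\<le>p2. of_nat (p2 choose j2) * ?Q (p2-j2) x2 * t^j2)" for t :: complex
  have "Z - Y = (\<Sum>j1\<le>p1. \<Sum>j2\<le>p2. of_nat (p1 choose j1) * of_nat (p2 choose j2) * ?P (p1-j1) x1 * ?Q (p2-j2) x2 *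
           (\<Sum>t<r. of_nat (j1+j2) * of_nat t ^ (j1+j2-1)))"
    unfolding Z_def Y_def sum_subtractf[symmetric] bp_tele[symmetric, unfolded bernoulli_num_def]
    by (intro sum.cong refl) (simp add: algebra_simps)
  also have "\<dots> = (\<Sum>t<r. \<Sum>j1\<le>p1. \<Sum>j2\<le>p2. of_nat (p1 choose j1) * ?P (p1-j1) x1 * of_nat (p2 choose j2) * ?Q (p2-j2) x2 *
           ((of_nat j1 * of_nat t^(j1-1)) * of_nat t^j2 + of_nat t^j1 * (of_nat j2 * of_nat t^(j2-1))))"
  proof -
    have "(\<Sum>j1\<le>p1. \<Sum>j2\<le>p2. of_nat (p1 choose j1) * of_nat (p2 choose j2) * ?P (p1-j1) x1 * ?Q (p2-j2) x2 *
           (\<Sum>t<r. of_nat (j1+j2) * of_nat t ^ (j1+j2-1)))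
       = (\<Sum>j1\<le>p1. \<Sum>t<r. \<Sum>j2\<le>p2. of_nat (p1 choose j1) * ?P (p1-j1) x1 * of_nat (p2 choose j2) * ?Q (p2-j2) x2 *
           ((of_nat j1 * of_nat t^(j1-1)) * of_nat t^j2 + of_nat t^j1 * (of_nat j2 * of_nat t^(j2-1))))"
      unfolding split_pow sum_distrib_left
      by (subst sum.swap) (simp only: ac_simps)
    also have "\<dots> = (\<Sum>t<r. \<Sum>j1\<le>p1. \<Sum>j2\<le>p2. of_nat (p1 choose j1) * ?P (p1-j1) x1 * of_nat (p2 choose j2) * ?Q (p2-j2) x2 *
           ((of_nat j1 * of_nat t^(j1-1)) * of_nat t^j2 + of_nat t^j1 * (of_nat j2 * of_nat t^(j2-1))))"
      by (rule sum.swap)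
    finally show ?thesis .
  qed
  also have "\<dots> = (\<Sum>t<r. A (of_nat t) * C' (of_nat t) + A' (of_nat t) * C (of_nat t))"
    apply (intro sum.cong refl)
    unfolding A_def A'_def C_def C'_def sum_product distrib_left sum.distrib
    by (simp only: ac_simps)
  also have "\<dots> = (\<Sum>t<r. (if p1 = 0 then 0 else of_nat p1 * ?P (p1-1) (x1 + of_nat t)) * ?Q p2 (x2 + of_nat t)
                         + ?P p1 (x1 + of_nat t) * (if p2 = 0 then 0 else of_nat p2 * ?Q (p2-1) (x2 + of_nat t)))"
  proof (intro sum.cong refl)
    fix t
    have "A (of_nat t) = (if p1 = 0 then 0 else of_nat p1 * ?P (p1-1) (x1 + of_nat t))"
      unfolding A_def by (rule conv2[OF P])
    moreover have "C (of_nat t) = (if p2 = 0 then 0 else of_nat p2 * ?Q (p2-1) (x2 + of_nat t))"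
      unfolding C_def by (rule conv2[OF Q])
    moreover have "A' (of_nat t) = ?P p1 (x1 + of_nat t)"
      using P unfolding A'_def appell_def by metis
    moreover have "C' (of_nat t) = ?Q p2 (x2 + of_nat t)"
      using Q unfolding C'_def appell_def by metis
    ultimately show "A (of_nat t) * C' (of_nat t) + A' (of_nat t) * C (of_nat t) =
      (if p1 = 0 then 0 else of_nat p1 * ?P (p1-1) (x1 + of_nat t)) * ?Q p2 (x2 + of_nat t)
                         + ?P p1 (x1 + of_nat t) * (if p2 = 0 then 0 else of_nat p2 * ?Q (p2-1) (x2 + of_nat t))"
      by simp
  qed
  also have "\<dots> = (if p1 = 0 then 0 else of_nat p1 * (\<Sum>t<r. ?P (p1 - 1) (x1 + of_nat t) * ?Q p2 (x2 + of_nat t)))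
         + (if p2 = 0 then 0 else of_nat p2 * (\<Sum>t<r. ?P p1 (x1 + of_nat t) * ?Q (p2 - 1) (x2 + of_nat t)))"
    by (simp add: sum.distrib sum_distrib_left ac_simps)
  finally have E2: "Z - Y = \<dots>" .
  show ?thesis using L1 R1 E2 ZX by simp
qed

end
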